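(* Let $m$ and $d$ be positive integers with $m\ge2$. There exist a positive integer $N=N(m,d)$ and a block $B=(b_1,\ldots,b_N)\in\{0,1\}^N$ such that for any real polynomial $P$ of degree $d$ and any real function $\eta\in\mathcal C^{d+1}([1,N])$ satisfying \[|\eta(t)|\le 1/20\quad\text{and}\quad \eta^{(d+1)}(t)\ne0\qquad\text{for all }t\in[1,N],\] there exists $n\in[1,N]$ such that \[\lfloor P(n)+\eta(n)\rfloor\not\equiv b_n\pmod m.\] *)

theory Defs
  imports "HOL-Analysis.Analysis" "HOL-Number_Theory.Cong"
begin

text \<open>For S = {1..N} this says that D 0 is
  of class C^k on the closed interval, with D j its j-th derivative.\<close>
definition deriv_chain_on :: "nat \<Rightarrow> real set \<Rightarrow> (nat \<Rightarrow> real \<Rightarrow> real) \<Rightarrow> bool" where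
  "deriv_chain_on k S D \<longleftrightarrow>
     (\<forall>j<k. \<forall>t\<in>S. (D j has_real_derivative D (Suc j) t) (at t within S)) \<and>
     continuous_on S (D k)"

end

theory Submission
  imports Defs
begin
definition fd :: "(nat \<Rightarrow> real) \<Rightarrow> nat \<Rightarrow> real" where
  "fd f = (\<lambda>x. f (Suc x) - f x)"

fun polyfun :: "nat \<Rightarrow> (nat \<Rightarrow> real) \<Rightarrow> bool" where
  "polyfun 0 f = (\<forall>x. f x = f 0)"
| "polyfun (Suc d) f = polyfun d (fd f)"

lemma polyfun_const: "polyfun d (\<lambda>_. c)"
proof (induction d arbitrary: c)
  case 0 then show ?case by simp
next
  case (Suc d) then show ?case by (simp add: fd_def)
qed

lemma polyfun_add: "polyfun d f \<Longrightarrow> polyfun d g \<Longrightarrow> polyfun d (\<lambda>x. f x + g x)"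
proof (induction d arbitrary: f g)
  case 0 then show ?case unfolding polyfun.simps by metis
next
  case (Suc d)
  have "fd (\<lambda>x. f x + g x) = (\<lambda>x. fd f x + fd g x)" by (auto simp: fd_def)
  then show ?case using Suc by simp
qed

lemma polyfun_scale: "polyfun d f \<Longrightarrow> polyfun d (\<lambda>x. c * f x)"
proof (induction d arbitrary: f)
  case 0 then show ?case unfolding polyfun.simps by metis
next
  case (Suc d)
  have "fd (\<lambda>x. c * f x) = (\<lambda>x. c * fd f x)" by (auto simp: fd_def algebra_simps)
  then show ?case using Suc by simp
qed

lemma polyfun_diff: "polyfun d f \<Longrightarrow> polyfun d g \<Longrightarrow> polyfun d (\<lambda>x. f x - g x)"
proof (induction d arbitrary: f g)
  case 0 then show ?case unfolding polyfun.simps by metis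
next
  case (Suc d)
  have "fd (\<lambda>x. f x - g x) = (\<lambda>x. fd f x - fd g x)" by (auto simp: fd_def)
  then show ?case using Suc by simp
qed

lemma polyfun_sum: "finite S \<Longrightarrow> (\<And>i. i \<in> S \<Longrightarrow> polyfun d (F i)) \<Longrightarrow> polyfun d (\<lambda>x. \<Sum>i\<in>S. F i x)"
proof (induction S rule: finite_induct)
  case empty then show ?case using polyfun_const[of d 0] by simp
next
  case (insert a S) then show ?case using polyfun_add[of d "F a" "\<lambda>x. \<Sum>i\<in>S. F i x"] by simp
qed

lemma polyfun_Suc: "polyfun d f \<Longrightarrow> polyfun (Suc d) f"
proof (induction d arbitrary: f)
  case 0
  then have h: "\<forall>x. f x = f 0" by simp
  have "fd f = (\<lambda>_. 0)"
  proof
    fix x show "fd f x = 0" unfolding fd_def using h by (metis diff_self)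
  qed
  then show ?case by simp
next
  case (Suc d) then show ?case by simp
qed

lemma polyfun_mono: "d \<le> e \<Longrightarrow> polyfun d f \<Longrightarrow> polyfun e f"
proof (induction e rule: dec_induct)
  case base then show ?case by simp
next
  case (step n) then show ?case using polyfun_Suc by blast
qed

lemma polyfun_shift: "polyfun d f \<Longrightarrow> polyfun d (\<lambda>y. f (a + y))"
proof (induction d arbitrary: f)
  case 0 then show ?case unfolding polyfun.simps by metis
next
  case (Suc d)
  have "fd (\<lambda>y. f (a + y)) = (\<lambda>y. fd f (a + y))" by (auto simp: fd_def)
  then show ?case using Suc by simp
qed

lemma polyfun_shiftdiff: "polyfun (Suc d) f \<Longrightarrow> polyfun d (\<lambda>y. f (y + a) - f y)"
proof (induction a)
  case 0 then show ?case using polyfun_const[of d 0] by simp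
next
  case (Suc a)
  have e: "(\<lambda>y. f (y + Suc a) - f y) = (\<lambda>y. fd f (a + y) + (f (y + a) - f y))"
    by (auto simp: fd_def add.commute)
  have "polyfun d (fd f)" using Suc.prems by simp
  then have "polyfun d (\<lambda>y. fd f (a + y))" by (rule polyfun_shift)
  then show ?case unfolding e using Suc by (intro polyfun_add) auto
qed

lemma polyfun_pow: "polyfun k (\<lambda>x. real x ^ k)"
proof (induction k rule: less_induct)
  case (less k)
  show ?case
  proof (cases k)
    case 0
    have "polyfun 0 (\<lambda>x. real x ^ 0)" by simp
    then show ?thesis using 0 by simp
  next
    case (Suc j)
    have e: "fd (\<lambda>x. real x ^ k) = (\<lambda>x. \<Sum>i\<le>j. real (Suc j choose i) * real x ^ i)"
    proof
      fix x
      have "(real x + 1) ^ Suc j = (\<Sum>i\<le>Suc j. real (Suc j choose i) * real x ^ i)"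
        using binomial_ring[of "real x" 1 "Suc j"] by (simp only: power_one mult_1_right)
      also have "\<dots> = (\<Sum>i\<le>j. real (Suc j choose i) * real x ^ i) + real x ^ Suc j"
        by (simp only: sum.atMost_Suc binomial_n_n)
      finally have h: "(real x + 1) ^ Suc j = (\<Sum>i\<le>j. real (Suc j choose i) * real x ^ i) + real x ^ Suc j" .
      have "fd (\<lambda>x. real x ^ k) x = (real x + 1) ^ Suc j - real x ^ Suc j"
        unfolding fd_def Suc by (simp only: of_nat_Suc add.commute)
      also have "\<dots> = (\<Sum>i\<le>j. real (Suc j choose i) * real x ^ i)"
        unfolding h by (rule add_diff_cancel_right')
      finally show "fd (\<lambda>x. real x ^ k) x = (\<Sum>i\<le>j. real (Suc j choose i) * real x ^ i)" .
    qed
    have "polyfun j (\<lambda>x. \<Sum>i\<le>j. real (Suc j choose i) * real x ^ i)"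
    proof (rule polyfun_sum)
      fix i assume "i \<in> {..j}"
      then have "i < k" "i \<le> j" using Suc by auto
      then have "polyfun j (\<lambda>x. real x ^ i)" using less.IH polyfun_mono by blast
      then show "polyfun j (\<lambda>x. real (Suc j choose i) * real x ^ i)" by (rule polyfun_scale)
    qed simp
    then show ?thesis unfolding Suc polyfun.simps e[unfolded Suc] .
  qed
qed

lemma polyfun_poly: "degree p \<le> d \<Longrightarrow> polyfun d (\<lambda>x. poly p (real x))"
  unfolding poly_altdef
  apply (rule polyfun_sum, simp)
  apply (rule polyfun_scale)
  apply (rule polyfun_mono[OF _ polyfun_pow])
  by auto

lemma fd_funpow_Suc: "(fd ^^ Suc i) f = (fd ^^ i) (fd f)"
  by (simp add: funpow_Suc_right del: funpow.simps)

lemma polyfun_iff: "polyfun d f \<longleftrightarrow> (\<forall>x. (fd ^^ d) f x = (fd ^^ d) f 0)"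
proof (induction d arbitrary: f)
  case 0 then show ?case by simp
next
  case (Suc d) then show ?case by (simp only: polyfun.simps fd_funpow_Suc)
qed

lemma fd_zero: "(fd ^^ i) (\<lambda>_. 0) = (\<lambda>_. 0)"
  by (induction i) (auto simp: fd_def)

lemma polyfun_high: "polyfun d f \<Longrightarrow> d < i \<Longrightarrow> (fd ^^ i) f x = 0"
proof -
  assume p: "polyfun d f" and i: "d < i"
  have h: "\<forall>x. (fd ^^ d) f x = (fd ^^ d) f 0" using p polyfun_iff by blast
  have z: "(fd ^^ Suc d) f = (\<lambda>_. 0)"
  proof
    fix x
    have "(fd ^^ Suc d) f x = (fd^^d) f (Suc x) - (fd^^d) f x" by (simp add: fd_def)
    also have "\<dots> = 0" using h by (metis diff_self)
    finally show "(fd ^^ Suc d) f x = 0" .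
  qed
  define r where "r = i - Suc d"
  have r: "i = r + Suc d" using i unfolding r_def by simp
  have "(fd ^^ i) f = (fd ^^ r) ((fd ^^ Suc d) f)" unfolding r funpow_add by (simp only: comp_apply)
  then have "(fd ^^ i) f = (\<lambda>_. 0)" by (simp only: z fd_zero)
  then show ?thesis by simp
qed

lemma polyfun_family: "(\<And>j. polyfun d (\<lambda>x. H x j)) \<Longrightarrow> polyfun d (\<lambda>x. (fd ^^ i) (H x) k)"
proof (induction i arbitrary: H k)
  case 0 then show ?case by simp
next
  case (Suc i)
  have "polyfun d (\<lambda>x. (fd ^^ i) (fd (H x)) k)"
    apply (rule Suc.IH)
    unfolding fd_def using Suc.prems by (intro polyfun_diff) auto
  then show ?case by (simp only: fd_funpow_Suc)
qed

lemma newton_all: "f j = (\<Sum>i\<le>j. real (j choose i) * (fd ^^ i) f 0)"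
proof (induction j arbitrary: f)
  case 0 then show ?case by simp
next
  case (Suc j)
  let ?a = "\<lambda>i. (fd ^^ i) f 0"
  have h0: "f (Suc j) = f j + fd f j" by (simp add: fd_def)
  have hA: "fd f j = (\<Sum>i\<le>j. real (j choose i) * ?a (Suc i))"
    using Suc.IH[of "fd f"] by (simp only: fd_funpow_Suc)
  have hB: "f j = (\<Sum>i\<le>j. real (j choose i) * ?a i)" using Suc.IH .
  have 1: "f (Suc j) = (\<Sum>i\<le>j. real (j choose i) * ?a i) + (\<Sum>i\<le>j. real (j choose i) * ?a (Suc i))"
    using h0 unfolding hA hB .
  have 2: "(\<Sum>i\<le>Suc j. real (Suc j choose i) * ?a i)
      = ?a 0 + (\<Sum>i\<le>j. real (j choose i) * ?a (Suc i)) + (\<Sum>i\<le>j. real (j choose Suc i) * ?a (Suc i))"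
  proof -
    have "(\<Sum>i\<le>Suc j. real (Suc j choose i) * ?a i) = real (Suc j choose 0) * ?a 0 + (\<Sum>i\<le>j. real (Suc j choose Suc i) * ?a (Suc i))"
      by (rule sum.atMost_Suc_shift)
    also have "(\<Sum>i\<le>j. real (Suc j choose Suc i) * ?a (Suc i)) = (\<Sum>i\<le>j. real (j choose i) * ?a (Suc i) + real (j choose Suc i) * ?a (Suc i))"
      by (rule sum.cong) (auto simp: algebra_simps)
    also have "\<dots> = (\<Sum>i\<le>j. real (j choose i) * ?a (Suc i)) + (\<Sum>i\<le>j. real (j choose Suc i) * ?a (Suc i))"
      by (rule sum.distrib)
    finally show ?thesis by (simp only: binomial_n_0 of_nat_1 mult_1_left add.assoc)
  qed
  have 3: "(\<Sum>i\<le>j. real (j choose i) * ?a i) = ?a 0 + (\<Sum>i\<le>j. real (j choose Suc i) * ?a (Suc i))"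
  proof -
    have "(\<Sum>i\<le>Suc j. real (j choose i) * ?a i) = real (j choose 0) * ?a 0 + (\<Sum>i\<le>j. real (j choose Suc i) * ?a (Suc i))"
      by (rule sum.atMost_Suc_shift)
    moreover have "(\<Sum>i\<le>Suc j. real (j choose i) * ?a i) = (\<Sum>i\<le>j. real (j choose i) * ?a i)"
      by (simp only: sum.atMost_Suc binomial_eq_0 lessI)
    ultimately show ?thesis by (simp only: binomial_n_0 of_nat_1 mult_1_left)
  qed
  show ?case unfolding 1 2 3 by (simp only: ac_simps)
qed

lemma newton: "polyfun d f \<Longrightarrow> f j = (\<Sum>i\<le>d. real (j choose i) * (fd ^^ i) f 0)"
proof -
  assume p: "polyfun d f"
  have e1: "(\<Sum>i\<le>max j d. real (j choose i) * (fd ^^ i) f 0) = (\<Sum>i\<le>j. real (j choose i) * (fd ^^ i) f 0)"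
    by (rule sum.mono_neutral_right) (auto simp: binomial_eq_0)
  have e2: "(\<Sum>i\<le>max j d. real (j choose i) * (fd ^^ i) f 0) = (\<Sum>i\<le>d. real (j choose i) * (fd ^^ i) f 0)"
    by (rule sum.mono_neutral_right) (auto simp: polyfun_high[OF p])
  have "f j = (\<Sum>i\<le>j. real (j choose i) * (fd ^^ i) f 0)" by (rule newton_all)
  also have "\<dots> = (\<Sum>i\<le>max j d. real (j choose i) * (fd ^^ i) f 0)" using e1 by (rule sym)
  also have "\<dots> = (\<Sum>i\<le>d. real (j choose i) * (fd ^^ i) f 0)" by (rule e2)
  finally show ?thesis .
qed

definition dZ :: "real \<Rightarrow> real" where "dZ x = \<bar>x - of_int (round x)\<bar>"

lemma dZ_le: "dZ x \<le> \<bar>x - of_int n\<bar>"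
  unfolding dZ_def by (rule round_diff_minimal)

lemma dZ_nonneg: "0 \<le> dZ x" unfolding dZ_def by simp

lemma dZ_add: "dZ (x + y) \<le> dZ x + dZ y"
proof -
  have "dZ (x + y) \<le> \<bar>x + y - of_int (round x + round y)\<bar>" by (rule dZ_le)
  also have "\<dots> \<le> dZ x + dZ y" unfolding dZ_def by simp
  finally show ?thesis .
qed

lemma dZ_minus: "dZ (- x) = dZ x"
proof -
  have "dZ (- x) \<le> dZ x"
    using dZ_le[of "-x" "- round x"] unfolding dZ_def by simp
  moreover have "dZ x \<le> dZ (- x)"
    using dZ_le[of "x" "- round (-x)"] unfolding dZ_def by simp
  ultimately show ?thesis by simp
qed

lemma dZ_diff: "dZ (x - y) \<le> dZ x + dZ y"
  using dZ_add[of x "-y"] dZ_minus[of y] by simp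

lemma dZ_zero: "dZ 0 = 0" unfolding dZ_def by simp

lemma frac_close:
  fixes a b :: real and B :: nat
  assumes "B > 0" "nat \<lfloor>frac a * B\<rfloor> = nat \<lfloor>frac b * B\<rfloor>"
  shows "dZ (a - b) < 1 / B"
proof -
  have fa: "0 \<le> frac a * B" "0 \<le> frac b * B" using assms frac_ge_0 by auto
  then have e: "\<lfloor>frac a * B\<rfloor> = \<lfloor>frac b * B\<rfloor>" using assms(2)
    by (metis floor_less_zero not_le eq_nat_nat_iff)
  have "\<bar>frac a * B - frac b * B\<bar> < 1"
  proof -
    obtain A1 B1 where AB: "A1 = frac a * B" "B1 = frac b * B" by simp
    obtain k where k: "k = \<lfloor>A1\<rfloor>" by simp
    have "of_int k \<le> A1" "A1 < of_int k + 1" using k by linarith+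
    moreover have kb: "k = \<lfloor>B1\<rfloor>" using k e AB by simp
    moreover have "of_int k \<le> B1" "B1 < of_int k + 1" using kb by linarith+
    ultimately have "\<bar>A1 - B1\<bar> < 1" unfolding abs_less_iff by linarith
    then show ?thesis using AB by simp
  qed
  moreover have "\<bar>frac a * B - frac b * B\<bar> = \<bar>frac a - frac b\<bar> * B"
    by (simp only: left_diff_distrib[symmetric] abs_mult abs_of_nat)
  ultimately have "\<bar>frac a - frac b\<bar> * B < 1" by simp
  then have "\<bar>frac a - frac b\<bar> < 1 / B" using assms(1) by (simp only: pos_less_divide_eq of_nat_0_less_iff)
  moreover have "dZ (a - b) \<le> \<bar>(a - b) - of_int (\<lfloor>a\<rfloor> - \<lfloor>b\<rfloor>)\<bar>" by (rule dZ_le)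
  moreover have "(a - b) - of_int (\<lfloor>a\<rfloor> - \<lfloor>b\<rfloor>) = frac a - frac b" unfolding frac_def by simp
  ultimately show ?thesis by simp
qed

lemma nat_lt_helper: "w < int B \<Longrightarrow> 0 < B \<Longrightarrow> nat w < B"
  by (cases "0 \<le> w") (auto simp: nat_less_iff)

lemma seq_strict: "\<forall>s<t. x s < (x (Suc s) :: nat) \<Longrightarrow> i < j \<Longrightarrow> j \<le> t \<Longrightarrow> x i < x j"
proof (induction j)
  case 0 then show ?case by simp
next
  case (Suc j)
  have s: "x j < x (Suc j)" using Suc.prems by simp
  show ?case
  proof (cases "i = j")
    case True then show ?thesis using s by simp
  next
    case False then have "i < j" using Suc.prems by simp
    then have "x i < x j" using Suc by simp
    then show ?thesis using s by simp
  qed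
qed

lemma seq_le: "\<forall>s<t. x s < (x (Suc s) :: nat) \<Longrightarrow> i \<le> j \<Longrightarrow> j \<le> t \<Longrightarrow> x i \<le> x j"
  using seq_strict[of t x i j] by (cases "i = j") auto

lemma seq_bound: "x 0 = 0 \<Longrightarrow> \<forall>s<t. x (Suc s) \<le> x s + (W::nat) \<Longrightarrow> s \<le> t \<Longrightarrow> x s \<le> s * W"
proof (induction s)
  case 0 then show ?case by simp
next
  case (Suc s)
  have "x (Suc s) \<le> x s + W" using Suc.prems by simp
  moreover have "x s \<le> s * W" using Suc by simp
  ultimately show ?case by simp
qed

lemma recurrence:
  "\<forall>(D::nat) (\<epsilon>::real). \<epsilon> > 0 \<longrightarrow> (\<exists>W::nat. \<forall>U :: nat \<Rightarrow> nat \<Rightarrow> real.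
     (\<forall>c<D. polyfun d (U c)) \<longrightarrow> (\<exists>q. 1 \<le> q \<and> q \<le> W \<and> (\<forall>c<D. dZ (U c q - U c 0) < \<epsilon>)))"
proof (induction d)
  case 0
  show ?case
  proof (intro allI impI)
    fix D :: nat and \<epsilon> :: real assume e: "\<epsilon> > 0"
    show "\<exists>W::nat. \<forall>U :: nat \<Rightarrow> nat \<Rightarrow> real.
     (\<forall>c<D. polyfun 0 (U c)) \<longrightarrow> (\<exists>q. 1 \<le> q \<and> q \<le> W \<and> (\<forall>c<D. dZ (U c q - U c 0) < \<epsilon>))"
    proof (rule exI[of _ "1::nat"], intro allI impI)
      fix U :: "nat \<Rightarrow> nat \<Rightarrow> real" assume U: "\<forall>c<D. polyfun 0 (U c)"
      show "\<exists>q. 1 \<le> q \<and> q \<le> 1 \<and> (\<forall>c<D. dZ (U c q - U c 0) < \<epsilon>)"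
      proof (intro exI[of _ "1::nat"] conjI allI impI)
        fix c assume "c < D"
        then have "polyfun 0 (U c)" using U by blast
        then have "\<forall>x. U c x = U c 0" unfolding polyfun.simps(1) .
        then have "U c 1 = U c 0" by blast
        then show "dZ (U c 1 - U c 0) < \<epsilon>" using e dZ_zero by simp
      qed auto
    qed
  qed
next
  case (Suc d)
  show ?case
  proof (intro allI impI)
    fix D :: nat and \<epsilon> :: real assume e: "\<epsilon> > 0"
    define B :: nat where "B = nat \<lceil>2/\<epsilon>\<rceil> + 1"
    have Bpos: "B > 0" unfolding B_def by simp
    have "real B > 2 / \<epsilon>" unfolding B_def by linarith
    then have "real B * \<epsilon> > 2" using e by (simp add: field_simps)
    then have B2: "1 / real B < \<epsilon> / 2" using e Bpos by (simp add: field_simps)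
    define K where "K = B ^ D"
    define \<epsilon>' where "\<epsilon>' = \<epsilon> / (2 * (real K + 1))"
    have e'pos: "\<epsilon>' > 0" unfolding \<epsilon>'_def using e by simp
    have Ke': "real K * \<epsilon>' < \<epsilon> / 2"
    proof -
      have "real K * \<epsilon>' = (\<epsilon> / 2) * (real K / (real K + 1))" unfolding \<epsilon>'_def by simp
      also have "\<dots> < (\<epsilon> / 2) * 1" using e by (intro mult_strict_left_mono) auto
      finally show ?thesis by simp
    qed
    obtain W' where W': "\<forall>U :: nat \<Rightarrow> nat \<Rightarrow> real. (\<forall>c<D * (K + 1). polyfun d (U c)) \<longrightarrow>
        (\<exists>q. 1 \<le> q \<and> q \<le> W' \<and> (\<forall>c<D * (K + 1). dZ (U c q - U c 0) < \<epsilon>'))"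
      using Suc.IH e'pos by blast
    show "\<exists>W::nat. \<forall>U :: nat \<Rightarrow> nat \<Rightarrow> real.
     (\<forall>c<D. polyfun (Suc d) (U c)) \<longrightarrow> (\<exists>q. 1 \<le> q \<and> q \<le> W \<and> (\<forall>c<D. dZ (U c q - U c 0) < \<epsilon>))"
    proof (rule exI[of _ "K * W'"], intro allI impI)
      fix U :: "nat \<Rightarrow> nat \<Rightarrow> real" assume U: "\<forall>c<D. polyfun (Suc d) (U c)"
      define Inv where "Inv = (\<lambda>t (x :: nat \<Rightarrow> nat). x 0 = 0 \<and> (\<forall>s<t. x s < x (Suc s) \<and> x (Suc s) \<le> x s + W') \<and>
          (\<forall>j\<le>t. \<forall>i<j. \<forall>c<D. dZ (U c (x j) - U c (x i) - U c (x j - x i) + U c 0) \<le> real j * \<epsilon>'))"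
      have constr: "t \<le> K \<Longrightarrow> \<exists>x. Inv t x" for t
      proof (induction t)
        case 0
        have "Inv 0 (\<lambda>_. 0)" unfolding Inv_def by simp
        then show ?case by blast
      next
        case (Suc t)
        then obtain x where x: "Inv t x" by auto
        have x0: "x 0 = 0" and xs: "\<forall>s<t. x s < x (Suc s)" and xw: "\<forall>s<t. x (Suc s) \<le> x s + W'"
          and xi: "\<forall>j\<le>t. \<forall>i<j. \<forall>c<D. dZ (U c (x j) - U c (x i) - U c (x j - x i) + U c 0) \<le> real j * \<epsilon>'"
          using x unfolding Inv_def by auto
        define V where "V = (\<lambda>c' y. if c' div D \<le> t then U (c' mod D) (x t + y) - U (c' mod D) (x t - x (c' div D) + y) else 0)"
        have Vp: "\<forall>c'<D * (K + 1). polyfun d (V c')"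
        proof (intro allI impI)
          fix c' assume c': "c' < D * (K + 1)"
          then have Dpos: "D > 0" by (cases D) auto
          show "polyfun d (V c')"
          proof (cases "c' div D \<le> t")
            case True
            define i where "i = c' div D"
            define c where "c = c' mod D"
            have cD: "c < D" unfolding c_def using Dpos by simp
            have xle: "x i \<le> x t" using seq_le[OF xs, of i t] True unfolding i_def by simp
            have pg: "polyfun d (\<lambda>z. U c (z + x i) - U c z)"
              using polyfun_shiftdiff U cD by blast
            have "polyfun d (\<lambda>y. U c ((x t - x i + y) + x i) - U c (x t - x i + y))"
              using polyfun_shift[OF pg] by simp
            moreover have "V c' = (\<lambda>y. U c ((x t - x i + y) + x i) - U c (x t - x i + y))"
            proof
              fix y
              have "x t - x i + y + x i = x t + y" using xle by simp
              then show "V c' y = U c ((x t - x i + y) + x i) - U c (x t - x i + y)"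
                unfolding V_def using True unfolding i_def c_def by simp
            qed
            ultimately show ?thesis by simp
          next
            case False
            then have "V c' = (\<lambda>_. 0)" unfolding V_def by auto
            then show ?thesis using polyfun_const by simp
          qed
        qed
        obtain y where y1: "1 \<le> y" and yW: "y \<le> W'" and yV: "\<forall>c'<D * (K + 1). dZ (V c' y - V c' 0) < \<epsilon>'"
          using W' Vp by blast
        define x' where "x' = x(Suc t := x t + y)"
        have "Inv (Suc t) x'"
          unfolding Inv_def
        proof (intro conjI allI impI)
          show "x' 0 = 0" unfolding x'_def using x0 by simp
        next
          fix s assume s: "s < Suc t"
          show "x' s < x' (Suc s)"
          proof (cases "s = t")
            case True then show ?thesis unfolding x'_def using y1 by simp
          next
            case False then have "s < t" using s by simp
            then show ?thesis unfolding x'_def using xs by simp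
          qed
        next
          fix s assume s: "s < Suc t"
          show "x' (Suc s) \<le> x' s + W'"
          proof (cases "s = t")
            case True then show ?thesis unfolding x'_def using yW by simp
          next
            case False then have "s < t" using s by simp
            then show ?thesis unfolding x'_def using xw by simp
          qed
        next
          fix j i c assume j: "j \<le> Suc t" and ij: "i < j" and cD: "c < D"
          show "dZ (U c (x' j) - U c (x' i) - U c (x' j - x' i) + U c 0) \<le> real j * \<epsilon>'"
          proof (cases "j = Suc t")
            case False
            then have jt: "j \<le> t" using j by simp
            then have "x' j = x j" "x' i = x i" unfolding x'_def using ij by auto
            then show ?thesis using xi jt ij cD by simp
          next
            case True
            then have it: "i \<le> t" using ij by simp
            have xj: "x' j = x t + y" unfolding x'_def True by simp
            have xi': "x' i = x i" unfolding x'_def using it by simp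
            have xle: "x i \<le> x t" using seq_le[OF xs, of i t] it by simp
            define c' where "c' = c + D * i"
            have c'D: "c' < D * (K + 1)"
            proof -
              have "c' < D * (i + 1)" unfolding c'_def using cD by simp
              also have "\<dots> \<le> D * (K + 1)" using it Suc.prems by simp
              finally show ?thesis .
            qed
            have c'm: "c' mod D = c" "c' div D = i" unfolding c'_def using cD by auto
            have Vy: "V c' y = U c (x t + y) - U c (x t - x i + y)" unfolding V_def using c'm it by simp
            have V0: "V c' 0 = U c (x t) - U c (x t - x i)" unfolding V_def using c'm it by simp
            have dV: "dZ (V c' y - V c' 0) < \<epsilon>'" using yV c'D by simp
            define Q where "Q = U c (x t) - U c (x i) - U c (x t - x i) + U c 0"
            have dQ: "dZ Q \<le> real t * \<epsilon>'"
            proof (cases "i = t")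
              case True
              then have "Q = 0" unfolding Q_def by simp
              then show ?thesis using dZ_zero e'pos by simp
            next
              case False
              then have "i < t" using it by simp
              then show ?thesis unfolding Q_def using xi cD by simp
            qed
            have arg: "x t + y - x i = x t - x i + y" using xle by simp
            have "U c (x' j) - U c (x' i) - U c (x' j - x' i) + U c 0 = (V c' y - V c' 0) + Q"
              unfolding arg xj xi' Vy V0 Q_def by simp
            then have "dZ (U c (x' j) - U c (x' i) - U c (x' j - x' i) + U c 0) \<le> dZ (V c' y - V c' 0) + dZ Q"
              using dZ_add by simp
            also have "\<dots> \<le> \<epsilon>' + real t * \<epsilon>'" using dV dQ by simp
            also have "\<dots> = real j * \<epsilon>'" unfolding True by (simp add: algebra_simps)
            finally show ?thesis .
          qed
        qed
        then show ?case by blast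
      qed
      obtain x where x: "Inv K x" using constr by blast
      have x0: "x 0 = 0" and xs: "\<forall>s<K. x s < x (Suc s)" and xw: "\<forall>s<K. x (Suc s) \<le> x s + W'"
        and xi: "\<forall>j\<le>K. \<forall>i<j. \<forall>c<D. dZ (U c (x j) - U c (x i) - U c (x j - x i) + U c 0) \<le> real j * \<epsilon>'"
        using x unfolding Inv_def by auto
      define f where "f = (\<lambda>t. map (\<lambda>c. nat \<lfloor>frac (U c (x t)) * real B\<rfloor>) [0..<D])"
      have fin: "finite {xs. set xs \<subseteq> {0..<B} \<and> length xs = D}"
        by (rule finite_lists_length_eq) simp
      have sub: "f ` {0..K} \<subseteq> {xs. set xs \<subseteq> {0..<B} \<and> length xs = D}"
      proof
        fix l assume "l \<in> f ` {0..K}"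
        then obtain t where l: "l = f t" by auto
        have "nat \<lfloor>frac (U c (x t)) * real B\<rfloor> < B" for c
        proof -
          have "frac (U c (x t)) * real B < 1 * real B"
            using frac_lt_1 Bpos by (intro mult_strict_right_mono) auto
          then have "\<lfloor>frac (U c (x t)) * real B\<rfloor> < int B" by (simp add: floor_less_iff)
          then show ?thesis using Bpos by (rule nat_lt_helper)
        qed
        then show "l \<in> {xs. set xs \<subseteq> {0..<B} \<and> length xs = D}" unfolding l f_def by auto
      qed
      have "card (f ` {0..K}) \<le> card {xs. set xs \<subseteq> {0..<B} \<and> length xs = D}"
        using card_mono[OF fin sub] .
      also have "\<dots> = K" unfolding K_def using card_lists_length_eq[of "{0..<B}" D] by simp
      finally have "card (f ` {0..K}) < card {0..K}" by simp
      then have "\<not> inj_on f {0..K}" by (rule pigeonhole)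
      then obtain i0 j0 where ij0: "i0 \<in> {0..K}" "j0 \<in> {0..K}" "i0 \<noteq> j0" "f i0 = f j0"
        unfolding inj_on_def by blast
      obtain i j where ij: "i < j" "j \<le> K" "f i = f j"
      proof (cases "i0 < j0")
        case True then show ?thesis using that ij0 by auto
      next
        case False then have "j0 < i0" using ij0 by simp
        then show ?thesis using that[of j0 i0] ij0 by auto
      qed
      have xij: "x i < x j" using seq_strict[OF xs ij(1) ij(2)] .
      have xjK: "x j \<le> K * W'"
      proof -
        have "x j \<le> j * W'" using seq_bound[OF x0 xw ij(2)] .
        also have "\<dots> \<le> K * W'" using ij(2) by (simp add: mult_right_mono)
        finally show ?thesis .
      qed
      show "\<exists>q. 1 \<le> q \<and> q \<le> K * W' \<and> (\<forall>c<D. dZ (U c q - U c 0) < \<epsilon>)"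
      proof (intro exI[of _ "x j - x i"] conjI allI impI)
        show "1 \<le> x j - x i" using xij by simp
        show "x j - x i \<le> K * W'" using xjK by simp
      next
        fix c assume cD: "c < D"
        have "f i ! c = f j ! c" using ij(3) by simp
        then have "nat \<lfloor>frac (U c (x j)) * real B\<rfloor> = nat \<lfloor>frac (U c (x i)) * real B\<rfloor>"
          unfolding f_def using cD by simp
        then have d1: "dZ (U c (x j) - U c (x i)) < 1 / real B" by (rule frac_close[OF Bpos])
        have d2: "dZ (U c (x j) - U c (x i) - U c (x j - x i) + U c 0) \<le> real j * \<epsilon>'"
          using xi ij cD by simp
        have "real j * \<epsilon>' \<le> real K * \<epsilon>'" using ij(2) e'pos by (simp add: mult_right_mono)
        then have d2': "dZ (U c (x j) - U c (x i) - U c (x j - x i) + U c 0) < \<epsilon> / 2"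
          using d2 Ke' by linarith
        have "U c (x j - x i) - U c 0 = (U c (x j) - U c (x i)) - (U c (x j) - U c (x i) - U c (x j - x i) + U c 0)"
          by simp
        then have "dZ (U c (x j - x i) - U c 0) \<le> dZ (U c (x j) - U c (x i)) + dZ (U c (x j) - U c (x i) - U c (x j - x i) + U c 0)"
          using dZ_diff by metis
        then show "dZ (U c (x j - x i) - U c 0) < \<epsilon>" using d1 d2' B2 by linarith
      qed
    qed
  qed
qed

lemma rseq_strict: "\<forall>s<k. x s < (x (Suc s) :: 'a::linorder) \<Longrightarrow> i < j \<Longrightarrow> j \<le> k \<Longrightarrow> x i < x j"
proof (induction j)
  case 0 then show ?case by simp
next
  case (Suc j)
  have s: "x j < x (Suc j)" using Suc.prems by simp
  show ?case
  proof (cases "i = j")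
    case True then show ?thesis using s by simp
  next
    case False then have "i < j" using Suc.prems by simp
    then have "x i < x j" using Suc by simp
    then show ?thesis using s by simp
  qed
qed

lemma rseq_le: "\<forall>s<k. x s < (x (Suc s) :: 'a::linorder) \<Longrightarrow> i \<le> j \<Longrightarrow> j \<le> k \<Longrightarrow> x i \<le> x j"
  using rseq_strict[of k x i j] by (cases "i = j") auto

lemma no_many_zeros:
  fixes E :: "nat \<Rightarrow> real \<Rightarrow> real" and t :: "nat \<Rightarrow> real"
  assumes "deriv_chain_on k {a..b} E" "\<forall>s\<in>{a..b}. E k s \<noteq> 0" "\<forall>i<k. t i < t (Suc i)"
    "a \<le> t 0" "t k \<le> b" "\<forall>i\<le>k. E 0 (t i) = 0"
  shows False
  using assms
proof (induction k arbitrary: E t)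
  case 0
  then have "t 0 \<in> {a..b}" by simp
  then show ?case using "0.prems"(2,6) by auto
next
  case (Suc k)
  have der: "\<And>j s. j < Suc k \<Longrightarrow> s \<in> {a..b} \<Longrightarrow> (E j has_real_derivative E (Suc j) s) (at s within {a..b})"
    using Suc.prems(1) unfolding deriv_chain_on_def by blast
  have cont0: "continuous_on {a..b} (E 0)"
    by (rule DERIV_continuous_on[OF der[of 0]]) simp
  have tin: "a \<le> t i \<and> t i \<le> b" if "i \<le> Suc k" for i
  proof -
    have "t 0 \<le> t i" using rseq_le[OF Suc.prems(3), of 0 i] that by simp
    moreover have "t i \<le> t (Suc k)" using rseq_le[OF Suc.prems(3), of i "Suc k"] that by simp
    ultimately show ?thesis using Suc.prems(4,5) by simp
  qed
  have ex: "\<exists>z. t i < z \<and> z < t (Suc i) \<and> E 1 z = 0" if i: "i \<le> k" for i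
  proof -
    have lt: "t i < t (Suc i)" using Suc.prems(3) i by simp
    have ta: "a \<le> t i" and tb: "t (Suc i) \<le> b" using tin[of i] tin[of "Suc i"] i by auto
    have "\<exists>z. t i < z \<and> z < t (Suc i) \<and> (\<lambda>v. E 1 z * v) = (\<lambda>v. 0)"
    proof (rule Rolle_deriv[OF lt])
      show "E 0 (t i) = E 0 (t (Suc i))" using Suc.prems(6) i by simp
      show "continuous_on {t i..t (Suc i)} (E 0)"
        by (rule continuous_on_subset[OF cont0]) (use ta tb in auto)
      fix x assume x: "t i < x" "x < t (Suc i)"
      then have xab: "a < x" "x < b" using ta tb by auto
      have "(E 0 has_real_derivative E 1 x) (at x within {a..b})" using der[of 0 x] xab by simp
      then have "(E 0 has_real_derivative E 1 x) (at x)" using at_within_Icc_at[OF xab] by simp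
      then show "(E 0 has_derivative (\<lambda>v. E 1 x * v)) (at x)"
        unfolding has_field_derivative_def by simp
    qed
    then obtain z where z: "t i < z" "z < t (Suc i)" "(\<lambda>v. E 1 z * v) = (\<lambda>v. 0)" by blast
    have "E 1 z = 0" using fun_cong[OF z(3), of 1] by simp
    then show ?thesis using z(1,2) by blast
  qed
  then have "\<forall>i. \<exists>z. i \<le> k \<longrightarrow> t i < z \<and> z < t (Suc i) \<and> E 1 z = 0" by blast
  then obtain z where z: "\<forall>i. i \<le> k \<longrightarrow> t i < z i \<and> z i < t (Suc i) \<and> E 1 (z i) = 0"
    by (metis choice)
  show False
  proof (rule Suc.IH[of "\<lambda>j. E (Suc j)" z])
    show "deriv_chain_on k {a..b} (\<lambda>j. E (Suc j))"
      using Suc.prems(1) unfolding deriv_chain_on_def by auto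
    show "\<forall>s\<in>{a..b}. E (Suc k) s \<noteq> 0" using Suc.prems(2) .
    show "\<forall>i<k. z i < z (Suc i)"
    proof (intro allI impI)
      fix i assume "i < k"
      then have "z i < t (Suc i)" "t (Suc i) < z (Suc i)" using z by auto
      then show "z i < z (Suc i)" by simp
    qed
    show "a \<le> z 0" using z tin[of 0] by force
    show "z k \<le> b" using z tin[of "Suc k"] by force
    show "\<forall>i\<le>k. E (Suc 0) (z i) = 0" using z by simp
  qed
qed

lemma pderiv_funpow_zero: "degree (p :: real poly) < k \<Longrightarrow> (pderiv ^^ k) p = 0"
proof (induction k arbitrary: p)
  case 0 then show ?case by simp
next
  case (Suc k)
  have e: "(pderiv ^^ Suc k) p = (pderiv ^^ k) (pderiv p)" by (simp only: funpow_Suc_right comp_apply)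
  show ?case
  proof (cases "degree p = 0")
    case True
    then have "pderiv p = 0" using pderiv_eq_0_iff by blast
    moreover have "(pderiv ^^ k) (0::real poly) = 0" for k
      by (induction k) auto
    ultimately show ?thesis unfolding e by simp
  next
    case False
    then have "degree (pderiv p) < k" using Suc.prems by (simp add: degree_pderiv)
    then show ?thesis unfolding e by (rule Suc.IH)
  qed
qed

lemma chain_add_poly:
  assumes ch: "deriv_chain_on k S D" and dg: "degree p < k"
  shows "deriv_chain_on k S (\<lambda>j s. D j s + poly ((pderiv ^^ j) p) s)"
  unfolding deriv_chain_on_def
proof (intro conjI ballI allI impI)
  fix j s assume j: "j < k" and s: "s \<in> S"
  have "(D j has_real_derivative D (Suc j) s) (at s within S)"
    using ch j s unfolding deriv_chain_on_def by blast
  moreover have "((\<lambda>x. poly ((pderiv ^^ j) p) x) has_real_derivative poly (pderiv ((pderiv ^^ j) p)) s) (at s within S)"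
    by (rule has_field_derivative_at_within) (rule poly_DERIV)
  ultimately have "((\<lambda>x. D j x + poly ((pderiv ^^ j) p) x) has_real_derivative D (Suc j) s + poly (pderiv ((pderiv ^^ j) p)) s) (at s within S)"
    by (rule DERIV_add)
  then show "((\<lambda>s. D j s + poly ((pderiv ^^ j) p) s) has_real_derivative D (Suc j) s + poly ((pderiv ^^ Suc j) p) s) (at s within S)"
    by simp
next
  have "(pderiv ^^ k) p = 0" using dg by (rule pderiv_funpow_zero)
  then have eq: "(\<lambda>s. D k s + poly ((pderiv ^^ k) p) s) = D k" by simp
  have "continuous_on S (D k)" using ch unfolding deriv_chain_on_def by blast
  then show "continuous_on S (\<lambda>s. D k s + poly ((pderiv ^^ k) p) s)" unfolding eq .
qed

function pf :: "nat \<Rightarrow> nat" where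
  "pf n = (if n = 0 then 0 else if even n then pf (n div 2) else if n mod 4 = 3 then 1 else 0)"
  by auto
termination by (relation "Wellfounded.measure id") auto

declare pf.simps[simp del]

lemma pf_range: "pf n \<in> {0, 1}"
proof (induction n rule: less_induct)
  case (less n)
  show ?case
  proof (cases "n = 0 \<or> odd n")
    case True then show ?thesis by (subst pf.simps) auto
  next
    case False
    then have "pf n = pf (n div 2)" by (subst pf.simps) auto
    moreover have "n div 2 < n" using False by simp
    ultimately show ?thesis using less by simp
  qed
qed

lemma pf_double: "X \<noteq> 0 \<Longrightarrow> pf (2 * X) = pf X"
  by (subst pf.simps[of "2 * X"]) simp

lemma pf_pair: "q \<ge> 1 \<Longrightarrow> pf (q * (4 * i + 1)) \<noteq> pf (q * (4 * i + 3))"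
proof (induction q rule: less_induct)
  case (less q)
  show ?case
  proof (cases "even q")
    case True
    then obtain r where r: "q = 2 * r" by blast
    then have r1: "r \<ge> 1" "r < q" using less.prems by auto
    have qa: "q * (4 * i + 1) = 2 * (r * (4 * i + 1))" "q * (4 * i + 3) = 2 * (r * (4 * i + 3))"
      unfolding r by simp_all
    have nz: "r * (4 * i + 1) \<noteq> 0" "r * (4 * i + 3) \<noteq> 0" using r1 by auto
    have a: "pf (q * (4 * i + 1)) = pf (r * (4 * i + 1))"
      unfolding qa using nz(1) by (rule pf_double)
    have b: "pf (q * (4 * i + 3)) = pf (r * (4 * i + 3))"
      unfolding qa using nz(2) by (rule pf_double)
    show ?thesis unfolding a b using less.IH r1 by simp
  next
    case False
    have e1: "q * (4 * i + 1) = q + (q * i) * 4" by (simp add: algebra_simps)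
    have e3: "q * (4 * i + 3) = 3 * q + (q * i) * 4" by (simp add: algebra_simps)
    have m1: "(q * (4 * i + 1)) mod 4 = q mod 4" unfolding e1 by simp
    have m3: "(q * (4 * i + 3)) mod 4 = (3 * q) mod 4" unfolding e3 by simp
    have o1: "odd (q * (4 * i + 1))" "odd (q * (4 * i + 3))" using False by auto
    have n1: "q * (4 * i + 1) \<noteq> 0" "q * (4 * i + 3) \<noteq> 0" using less.prems by auto
    have p1: "pf (q * (4 * i + 1)) = (if q mod 4 = 3 then 1 else 0)"
      using o1 n1 m1 by (subst pf.simps[of "q * (4 * i + 1)"]) simp
    have p3: "pf (q * (4 * i + 3)) = (if (3 * q) mod 4 = 3 then 1 else 0)"
      using o1 n1 m3 by (subst pf.simps[of "q * (4 * i + 3)"]) simp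
    have "q mod 4 = 3 \<longleftrightarrow> (3 * q) mod 4 \<noteq> 3" using False by presburger
    then show ?thesis unfolding p1 p3 by simp
  qed
qed

definition bp :: "nat \<Rightarrow> real poly" where
  "bp i = smult (1 / fact i) (\<Prod>l<i. [:- of_nat l, 1:])"

lemma poly_bp: "poly (bp i) (real j) = real (j choose i)"
proof -
  have "poly (bp i) (real j) = (\<Prod>l<i. real j - of_nat l) / fact i"
    unfolding bp_def by (simp add: poly_prod)
  also have "\<dots> = real j gchoose i"
    by (simp add: gbinomial_prod_rev atLeast0LessThan)
  also have "\<dots> = real (j choose i)" by (simp add: binomial_gbinomial)
  finally show ?thesis .
qed

lemma degree_bp: "degree (bp i) \<le> i"
proof -
  have "degree (\<Prod>l<i. [:- of_nat l, 1::real:]) \<le> (\<Sum>l<i. (degree \<circ> (\<lambda>l. [:- of_nat l, 1::real:])) l)"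
    by (rule degree_prod_sum_le) simp
  also have "\<dots> = i" by simp
  finally show ?thesis unfolding bp_def using degree_smult_le order_trans by blast
qed

definition bq :: "nat \<Rightarrow> nat \<Rightarrow> real poly" where
  "bq q i = pcompose (bp i) [:0, 1 / real q:]"

lemma poly_bq: "q > 0 \<Longrightarrow> poly (bq q i) (real q * real j) = real (j choose i)"
  unfolding bq_def by (simp add: poly_pcompose poly_bp)

lemma degree_bq: "degree (bq q i) \<le> i"
proof -
  have "degree (bq q i) = degree (bp i) * degree [:0, 1 / real q:]" unfolding bq_def by (rule degree_pcompose)
  also have "\<dots> \<le> i * 1" using degree_bp by (intro mult_le_mono) auto
  finally show ?thesis by simp
qed

lemma fd_const: "(fd ^^ Suc c) (\<lambda>_. K) = (\<lambda>_. 0)"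
proof -
  have "fd (\<lambda>_. K) = (\<lambda>_. 0)" by (simp add: fd_def)
  then have "(fd ^^ Suc c) (\<lambda>_. K) = (fd ^^ c) (\<lambda>_. 0)" by (simp only: fd_funpow_Suc)
  then show ?thesis using fd_zero by simp
qed

lemma polyfun_polyscale: "degree P \<le> d \<Longrightarrow> polyfun d (\<lambda>x. c * poly P (real x * r))"
proof -
  assume dP: "degree P \<le> d"
  have "degree (pcompose P [:0, r:]) \<le> d"
  proof -
    have "degree (pcompose P [:0, r:]) = degree P * degree [:0, r:]" by (rule degree_pcompose)
    also have "\<dots> \<le> d * 1" using dP by (intro mult_le_mono) auto
    finally show ?thesis by simp
  qed
  then have "polyfun d (\<lambda>x. poly (pcompose P [:0, r:]) (real x))" by (rule polyfun_poly)
  moreover have "(\<lambda>x. poly (pcompose P [:0, r:]) (real x)) = (\<lambda>x. poly P (real x * r))"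
    by (simp add: poly_pcompose mult.commute)
  ultimately have "polyfun d (\<lambda>x. poly P (real x * r))" by simp
  then show ?thesis by (rule polyfun_scale)
qed

lemma sum_split0: "(\<Sum>i\<le>(d::nat). g i) = g 0 + (\<Sum>i\<in>{1..d}. (g i :: real))"
proof -
  have "{..d} = insert 0 {1..d}" by auto
  then show ?thesis by simp
qed

theorem theorem7:
  fixes m d :: nat
  assumes "m \<ge> 2" and "d \<ge> 1"
  shows "\<exists>N::nat. N \<ge> 1 \<and> (\<exists>b :: nat \<Rightarrow> nat. (\<forall>n\<in>{1..N}. b n \<in> {0, 1}) \<and>
     (\<forall>(P :: real poly) (\<eta> :: real \<Rightarrow> real) (D :: nat \<Rightarrow> real \<Rightarrow> real).
        degree P = d \<and> D 0 = \<eta> \<and> deriv_chain_on (d + 1) {1..real N} D \<and>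
        (\<forall>t\<in>{1..real N}. \<bar>\<eta> t\<bar> \<le> 1/20 \<and> D (d + 1) t \<noteq> 0)
        \<longrightarrow> (\<exists>n\<in>{1..N}. \<not> [\<lfloor>poly P (real n) + \<eta> (real n)\<rfloor> = int (b n)] (mod int m))))"
proof -
  have m2: "m \<ge> 2" and d1: "d \<ge> 1" using assms by auto
  define J where "J = 4 * d + 7"
  define \<epsilon> :: real where "\<epsilon> = 1 / (5 * real m * real d * 2 ^ J)"
  have epos: "\<epsilon> > 0" unfolding \<epsilon>_def using m2 d1 by simp
  have eprod: "real m * (real d * (2 ^ J * \<epsilon>)) = 1 / 5"
    unfolding \<epsilon>_def using m2 d1 by (simp add: field_simps)
  obtain W where W: "\<forall>U :: nat \<Rightarrow> nat \<Rightarrow> real. (\<forall>c<d. polyfun d (U c)) \<longrightarrow>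
      (\<exists>q. 1 \<le> q \<and> q \<le> W \<and> (\<forall>c<d. dZ (U c q - U c 0) < \<epsilon>))"
    using recurrence[of d] epos by blast
  define N where "N = (W + 1) * J"
  show ?thesis
  proof (rule exI[of _ N], intro conjI)
    show "N \<ge> 1" unfolding N_def J_def by simp
    show "\<exists>b :: nat \<Rightarrow> nat. (\<forall>n\<in>{1..N}. b n \<in> {0, 1}) \<and>
     (\<forall>(P :: real poly) (\<eta> :: real \<Rightarrow> real) (D :: nat \<Rightarrow> real \<Rightarrow> real).
        degree P = d \<and> D 0 = \<eta> \<and> deriv_chain_on (d + 1) {1..real N} D \<and>
        (\<forall>t\<in>{1..real N}. \<bar>\<eta> t\<bar> \<le> 1/20 \<and> D (d + 1) t \<noteq> 0)
        \<longrightarrow> (\<exists>n\<in>{1..N}. \<not> [\<lfloor>poly P (real n) + \<eta> (real n)\<rfloor> = int (b n)] (mod int m)))"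
    proof (rule exI[of _ pf], intro conjI)
      show "\<forall>n\<in>{1..N}. pf n \<in> {0, 1}" using pf_range by blast
      show "\<forall>(P :: real poly) (\<eta> :: real \<Rightarrow> real) (D :: nat \<Rightarrow> real \<Rightarrow> real).
        degree P = d \<and> D 0 = \<eta> \<and> deriv_chain_on (d + 1) {1..real N} D \<and>
        (\<forall>t\<in>{1..real N}. \<bar>\<eta> t\<bar> \<le> 1/20 \<and> D (d + 1) t \<noteq> 0)
        \<longrightarrow> (\<exists>n\<in>{1..N}. \<not> [\<lfloor>poly P (real n) + \<eta> (real n)\<rfloor> = int (pf n)] (mod int m))"
      proof (intro allI impI)
        fix P :: "real poly" and \<eta> :: "real \<Rightarrow> real" and D :: "nat \<Rightarrow> real \<Rightarrow> real"
        assume H: "degree P = d \<and> D 0 = \<eta> \<and> deriv_chain_on (d + 1) {1..real N} D \<and>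
          (\<forall>t\<in>{1..real N}. \<bar>\<eta> t\<bar> \<le> 1/20 \<and> D (d + 1) t \<noteq> 0)"
        have dP: "degree P = d" and D0: "D 0 = \<eta>" and ch: "deriv_chain_on (d + 1) {1..real N} D"
          and eb: "\<And>t. t \<in> {1..real N} \<Longrightarrow> \<bar>\<eta> t\<bar> \<le> 1/20"
          and Dnz: "\<And>t. t \<in> {1..real N} \<Longrightarrow> D (d + 1) t \<noteq> 0"
          using H by auto
        show "\<exists>n\<in>{1..N}. \<not> [\<lfloor>poly P (real n) + \<eta> (real n)\<rfloor> = int (pf n)] (mod int m)"
        proof (rule ccontr)
          assume "\<not> (\<exists>n\<in>{1..N}. \<not> [\<lfloor>poly P (real n) + \<eta> (real n)\<rfloor> = int (pf n)] (mod int m))"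
          then have cong: "\<And>n. n \<in> {1..N} \<Longrightarrow> [\<lfloor>poly P (real n) + \<eta> (real n)\<rfloor> = int (pf n)] (mod int m)"
            by blast
          define U where "U = (\<lambda>c x. (fd ^^ Suc c) (\<lambda>j. (1 / real m) * poly P (real x * real j)) 0)"
          have Up: "\<forall>c<d. polyfun d (U c)"
          proof (intro allI impI)
            fix c assume "c < d"
            show "polyfun d (U c)" unfolding U_def
              by (rule polyfun_family) (rule polyfun_polyscale, simp add: dP)
          qed
          obtain q where q1: "1 \<le> q" and qW: "q \<le> W" and qd: "\<forall>c<d. dZ (U c q - U c 0) < \<epsilon>"
            using W Up by blast
          have U0: "U c 0 = 0" for c
          proof -
            have "(\<lambda>j. (1 / real m) * poly P (real (0::nat) * real j)) = (\<lambda>_. (1 / real m) * poly P 0)" by simp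
            then show ?thesis unfolding U_def using fd_const by simp
          qed
          define f where "f = (\<lambda>j. (1 / real m) * poly P (real q * real j))"
          define a where "a = (\<lambda>i. (fd ^^ i) f 0)"
          have aU: "a (Suc c) = U c q" for c unfolding a_def f_def U_def by simp
          define k where "k = (\<lambda>i. round (a i))"
          define \<theta> where "\<theta> = (\<lambda>i. a i - of_int (k i))"
          have th: "\<bar>\<theta> i\<bar> \<le> \<epsilon>" if i_in: "i \<in> {1..d}" for i
          proof -
            obtain c where c: "i = Suc c" "c < d" using i_in by (cases i) auto
            have "dZ (a i) < \<epsilon>" using qd c aU U0 by simp
            then show ?thesis unfolding \<theta>_def k_def dZ_def by simp
          qed
          have fpoly: "polyfun d f" unfolding f_def
          proof -
            have "polyfun d (\<lambda>x. (1 / real m) * poly P (real x * real q))" by (rule polyfun_polyscale) (simp add: dP)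
            then show "polyfun d (\<lambda>j. (1 / real m) * poly P (real q * real j))" by (simp add: mult.commute)
          qed
          have qpos: "q > 0" using q1 by simp
          have mpos: "real m > 0" using m2 by simp
          define R where "R = (\<Sum>i\<in>{1..d}. smult (real m * of_int (k i)) (bq q i))"
          have dR: "degree R \<le> d" unfolding R_def
            by (rule degree_sum_le) (auto intro: order_trans[OF degree_smult_le] order_trans[OF degree_bq])
          define cI :: int where "cI = \<lfloor>poly P 0 - 1/4\<rfloor> + 1"
          have cI1: "of_int cI - 1 \<le> poly P 0 - 1/4" "poly P 0 - 1/4 < of_int cI"
            unfolding cI_def by linarith+
          define \<Phi> where "\<Phi> = (\<lambda>x. poly P x + \<eta> x - poly R x - of_int cI)"
          define K where "K = (\<lambda>j. \<Sum>i\<in>{1..d}. k i * int (j choose i))"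
          have key: "\<lfloor>poly P (real (q * j)) + \<eta> (real (q * j))\<rfloor> = \<lfloor>\<Phi> (real (q * j))\<rfloor> + cI + int m * K j
              \<and> -1 \<le> \<Phi> (real (q * j)) \<and> \<Phi> (real (q * j)) < 1"
            if j: "1 \<le> j" "j \<le> J" for j
          proof -
            have x_in: "real (q * j) \<in> {1..real N}"
            proof -
              have "1 \<le> q * j" using q1 j by simp
              moreover have "q * j \<le> N" unfolding N_def using qW j by (intro mult_le_mono) auto
              ultimately have "real 1 \<le> real (q * j)" "real (q * j) \<le> real N" using of_nat_le_iff by blast+
              then show ?thesis by simp
            qed
            have rx: "real (q * j) = real q * real j" by simp
            have Rv: "poly R (real (q * j)) = real m * of_int (K j)"
            proof -
              have "poly R (real (q * j)) = (\<Sum>i\<in>{1..d}. real m * of_int (k i) * poly (bq q i) (real q * real j))"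
                unfolding R_def rx by (simp add: poly_sum)
              also have "\<dots> = (\<Sum>i\<in>{1..d}. real m * (of_int (k i) * real (j choose i)))"
                using poly_bq[OF qpos] by (simp add: mult.assoc)
              also have "\<dots> = real m * of_int (K j)"
                unfolding K_def by (simp add: sum_distrib_left)
              finally show ?thesis .
            qed
            have fj: "f j = (\<Sum>i\<le>d. real (j choose i) * a i)" unfolding a_def by (rule newton[OF fpoly])
            have f0: "f 0 = (1 / real m) * poly P 0" unfolding f_def by simp
            have Pv: "poly P (real (q * j)) = real m * f j" unfolding f_def rx using mpos by simp
            have P1: "poly P (real (q * j)) = real m * (a 0 + (\<Sum>i\<in>{1..d}. real (j choose i) * a i))"
              unfolding Pv fj sum_split0 by simp
            have A0: "a 0 = (1 / real m) * poly P 0" unfolding a_def using f0 by simp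
            have S1: "(\<Sum>i\<in>{1..d}. real (j choose i) * a i) = (\<Sum>i\<in>{1..d}. real (j choose i) * of_int (k i)) + (\<Sum>i\<in>{1..d}. real (j choose i) * \<theta> i)"
            proof -
              have "(\<Sum>i\<in>{1..d}. real (j choose i) * a i) = (\<Sum>i\<in>{1..d}. real (j choose i) * of_int (k i) + real (j choose i) * \<theta> i)"
                by (rule sum.cong) (simp_all add: \<theta>_def algebra_simps)
              then show ?thesis by (simp only: sum.distrib)
            qed
            have S2: "(\<Sum>i\<in>{1..d}. real (j choose i) * of_int (k i)) = of_int (K j)"
              unfolding K_def by (simp add: mult.commute)
            have Pv2: "poly P (real (q * j)) = poly P 0 + real m * of_int (K j) + real m * (\<Sum>i\<in>{1..d}. real (j choose i) * \<theta> i)"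
              unfolding P1 S1 S2 A0 using mpos by (simp add: algebra_simps)
            define Ej where "Ej = real m * (\<Sum>i\<in>{1..d}. real (j choose i) * \<theta> i)"
            have Ejb: "\<bar>Ej\<bar> \<le> 1/5"
            proof -
              have "\<bar>\<Sum>i\<in>{1..d}. real (j choose i) * \<theta> i\<bar> \<le> (\<Sum>i\<in>{1..d}. \<bar>real (j choose i) * \<theta> i\<bar>)"
                by (rule sum_abs)
              also have "\<dots> \<le> (\<Sum>i\<in>{1..d}. 2 ^ J * \<epsilon>)"
              proof (rule sum_mono)
                fix i assume i: "i \<in> {1..d}"
                have "real (j choose i) \<le> 2 ^ J"
                proof -
                  have "j choose i \<le> 2 ^ j" by (rule binomial_le_pow2)
                  also have "(2::nat) ^ j \<le> 2 ^ J" using j by (intro power_increasing) auto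
                  finally show ?thesis by (metis of_nat_le_iff of_nat_numeral of_nat_power)
                qed
                then show "\<bar>real (j choose i) * \<theta> i\<bar> \<le> 2 ^ J * \<epsilon>"
                  unfolding abs_mult using th[OF i] by (intro mult_mono) auto
              qed
              also have "\<dots> = real d * (2 ^ J * \<epsilon>)" by simp
              finally have "\<bar>\<Sum>i\<in>{1..d}. real (j choose i) * \<theta> i\<bar> \<le> real d * (2 ^ J * \<epsilon>)" .
              then have "real m * \<bar>\<Sum>i\<in>{1..d}. real (j choose i) * \<theta> i\<bar> \<le> real m * (real d * (2 ^ J * \<epsilon>))"
                using mpos by (intro mult_left_mono) auto
              then show ?thesis unfolding Ej_def eprod abs_mult using mpos by simp
            qed
            have PhiV: "\<Phi> (real (q * j)) = poly P 0 + Ej + \<eta> (real (q * j)) - of_int cI"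
              unfolding \<Phi>_def Pv2 Rv Ej_def by simp
            have etab: "\<bar>\<eta> (real (q * j))\<bar> \<le> 1/20" using eb x_in by simp
            have b1: "-1 \<le> \<Phi> (real (q * j))" using PhiV Ejb etab cI1 by linarith
            have b2: "\<Phi> (real (q * j)) < 1" using PhiV Ejb etab cI1 by linarith
            have "poly P (real (q * j)) + \<eta> (real (q * j)) = \<Phi> (real (q * j)) + of_int (cI + int m * K j)"
              unfolding \<Phi>_def Rv by simp
            then have "\<lfloor>poly P (real (q * j)) + \<eta> (real (q * j))\<rfloor> = \<lfloor>\<Phi> (real (q * j))\<rfloor> + (cI + int m * K j)"
              by (simp only: floor_add_int)
            then show ?thesis using b1 b2 by simp
          qed
          have cmod: "[\<lfloor>\<Phi> (real (q * j))\<rfloor> + cI = int (pf (q * j))] (mod int m)" if j: "1 \<le> j" "j \<le> J" for j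
          proof -
            have inN: "q * j \<in> {1..N}"
            proof -
              have "1 \<le> q * j" using q1 j by simp
              moreover have "q * j \<le> N" unfolding N_def using qW j by (intro mult_le_mono) auto
              ultimately show ?thesis by simp
            qed
            have "[\<lfloor>\<Phi> (real (q * j))\<rfloor> + cI + int m * K j = int (pf (q * j))] (mod int m)"
              using cong[OF inN] key[OF j] by simp
            then show ?thesis unfolding cong_def by simp
          qed
          have zero_ex: "\<exists>t. real q * real (4 * i + 1) \<le> t \<and> t \<le> real q * real (4 * i + 3) \<and> \<Phi> t = 0"
            if i: "i \<le> d + 1" for i
          proof -
            define j1 where "j1 = 4 * i + 1"
            define j2 where "j2 = 4 * i + 3"
            have j1J: "1 \<le> j1" "j1 \<le> J" and j2J: "1 \<le> j2" "j2 \<le> J" unfolding j1_def j2_def J_def using i by auto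
            have pfne: "pf (q * j1) \<noteq> pf (q * j2)" unfolding j1_def j2_def using pf_pair q1 by blast
            have fl_ne: "\<lfloor>\<Phi> (real (q * j1))\<rfloor> \<noteq> \<lfloor>\<Phi> (real (q * j2))\<rfloor>"
            proof
              assume eq: "\<lfloor>\<Phi> (real (q * j1))\<rfloor> = \<lfloor>\<Phi> (real (q * j2))\<rfloor>"
              have c1: "[\<lfloor>\<Phi> (real (q * j1))\<rfloor> + cI = int (pf (q * j1))] (mod int m)" by (rule cmod[OF j1J])
              have c2: "[\<lfloor>\<Phi> (real (q * j1))\<rfloor> + cI = int (pf (q * j2))] (mod int m)" using cmod[OF j2J] eq by simp
              have "[int (pf (q * j1)) = int (pf (q * j2))] (mod int m)"
                using c1 c2 by (metis cong_sym cong_trans)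
              then have "int (pf (q * j1)) mod int m = int (pf (q * j2)) mod int m" unfolding cong_def .
              moreover have "pf (q * j1) \<in> {0, 1}" "pf (q * j2) \<in> {0, 1}" using pf_range by blast+
              ultimately show False using pfne m2 by auto
            qed
            have x1: "1 \<le> real q * real j1"
            proof -
              have "1 \<le> q * j1" using q1 j1J by simp
              then have "real 1 \<le> real (q * j1)" using of_nat_le_iff by blast
              then show ?thesis by simp
            qed
            have x12: "real q * real j1 \<le> real q * real j2" unfolding j1_def j2_def by (intro mult_left_mono) auto
            have x2: "real q * real j2 \<le> real N"
            proof -
              have "q * j2 \<le> N" unfolding N_def using qW j2J by (intro mult_le_mono) auto
              then have "real (q * j2) \<le> real N" using of_nat_le_iff by blast
              then show ?thesis by simp
            qed
            have contPhi: "continuous_on {real q * real j1..real q * real j2} \<Phi>"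
            proof -
              have "\<And>s. s \<in> {1..real N} \<Longrightarrow> (D 0 has_real_derivative D (Suc 0) s) (at s within {1..real N})"
                using ch unfolding deriv_chain_on_def by auto
              then have "continuous_on {1..real N} (D 0)" by (rule DERIV_continuous_on)
              then have ce: "continuous_on {1..real N} \<eta>" using D0 by simp
              have "continuous_on {1..real N} \<Phi>" unfolding \<Phi>_def
                by (intro continuous_intros ce)
              then show ?thesis by (rule continuous_on_subset) (use x1 x2 in auto)
            qed
            have r1: "real (q * j1) = real q * real j1" "real (q * j2) = real q * real j2" by simp_all
            have "-1 \<le> \<Phi> (real (q * j1))" "\<Phi> (real (q * j1)) < 1" using key[OF j1J] by auto
            moreover have "-1 \<le> \<Phi> (real (q * j2))" "\<Phi> (real (q * j2)) < 1" using key[OF j2J] by auto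
            ultimately have "(0 \<le> \<Phi> (real (q * j1)) \<and> \<Phi> (real (q * j2)) < 0) \<or> (\<Phi> (real (q * j1)) < 0 \<and> 0 \<le> \<Phi> (real (q * j2)))"
              using fl_ne by (smt (verit) floor_eq_iff of_int_0 of_int_minus of_int_1)
            then have "\<exists>t. real q * real j1 \<le> t \<and> t \<le> real q * real j2 \<and> \<Phi> t = 0"
            proof
              assume "0 \<le> \<Phi> (real (q * j1)) \<and> \<Phi> (real (q * j2)) < 0"
              then show ?thesis using IVT2'[of \<Phi> "real q * real j2" 0 "real q * real j1", OF _ _ x12 contPhi] r1 by simp
            next
              assume "\<Phi> (real (q * j1)) < 0 \<and> 0 \<le> \<Phi> (real (q * j2))"
              then show ?thesis using IVT'[of \<Phi> "real q * real j1" 0 "real q * real j2", OF _ _ x12 contPhi] r1 by simp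
            qed
            then show ?thesis unfolding j1_def j2_def .
          qed
          then have "\<forall>i. \<exists>t. i \<le> d + 1 \<longrightarrow> real q * real (4 * i + 1) \<le> t \<and> t \<le> real q * real (4 * i + 3) \<and> \<Phi> t = 0"
            by blast
          then obtain tz where tz: "\<forall>i. i \<le> d + 1 \<longrightarrow> real q * real (4 * i + 1) \<le> tz i \<and> tz i \<le> real q * real (4 * i + 3) \<and> \<Phi> (tz i) = 0"
            by (metis choice)
          define Pp where "Pp = P - R - [:of_int cI:]"
          have dPp: "degree Pp < d + 1"
          proof -
            have "degree (P - R) \<le> d" using dP dR degree_diff_le by blast
            moreover have "degree [:of_int cI :: real:] \<le> d" by simp
            ultimately have "degree Pp \<le> d" unfolding Pp_def by (rule degree_diff_le)
            then show ?thesis by simp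
          qed
          define E where "E = (\<lambda>j s. D j s + poly ((pderiv ^^ j) Pp) s)"
          show False
          proof (rule no_many_zeros[of "d + 1" 1 "real N" E tz])
            show "deriv_chain_on (d + 1) {1..real N} E" unfolding E_def by (rule chain_add_poly[OF ch dPp])
            show "\<forall>s\<in>{1..real N}. E (d + 1) s \<noteq> 0"
              unfolding E_def using pderiv_funpow_zero[OF dPp] Dnz by simp
            show "\<forall>i<d + 1. tz i < tz (Suc i)"
            proof (intro allI impI)
              fix i assume i: "i < d + 1"
              have "tz i \<le> real q * real (4 * i + 3)" using tz i by simp
              also have "\<dots> < real q * real (4 * Suc i + 1)" using qpos by simp
              also have "\<dots> \<le> tz (Suc i)"
              proof -
                have "Suc i \<le> d + 1 \<longrightarrow> real q * real (4 * Suc i + 1) \<le> tz (Suc i) \<and> tz (Suc i) \<le> real q * real (4 * Suc i + 3) \<and> \<Phi> (tz (Suc i)) = 0"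
                  using tz by (rule spec)
                then show ?thesis using i by linarith
              qed
              finally show "tz i < tz (Suc i)" .
            qed
            show "1 \<le> tz 0"
            proof -
              have "1 \<le> real q" using q1 by simp
              also have "\<dots> \<le> tz 0"
              proof -
                have "0 \<le> d + 1 \<longrightarrow> real q * real (4 * 0 + 1) \<le> tz 0 \<and> tz 0 \<le> real q * real (4 * 0 + 3) \<and> \<Phi> (tz 0) = 0"
                  using tz by (rule spec)
                then show ?thesis by simp
              qed
              finally show ?thesis .
            qed
            show "tz (d + 1) \<le> real N"
            proof -
              have "tz (d + 1) \<le> real q * real (4 * (d + 1) + 3)" using tz by blast
              also have "\<dots> = real (q * J)" unfolding J_def by simp
              also have "\<dots> \<le> real N"
              proof -
                have "q * J \<le> N" unfolding N_def using qW by (intro mult_le_mono) auto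
                then show ?thesis using of_nat_le_iff by blast
              qed
              finally show ?thesis .
            qed
            show "\<forall>i\<le>d + 1. E 0 (tz i) = 0"
            proof (intro allI impI)
              fix i assume "i \<le> d + 1"
              then have "\<Phi> (tz i) = 0" using tz by blast
              then show "E 0 (tz i) = 0" unfolding E_def Pp_def \<Phi>_def using D0 by simp
            qed
          qed
        qed
      qed
    qed
  qed
qed

end
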